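(* Let $\mathbb{S}$ be a metric space with its Borel $\sigma$-field, let $\{\mu_n\}_{n=1,2,\ldots}$ be a sequence of measures on $\mathbb{S}$ converging weakly to a finite measure $\mu$ on $\mathbb{S}$, and let $\{f_n,g_n\}_{n=1,2,\ldots}$ be measurable $[-\infty,+\infty]$-valued functions on $\mathbb{S}$ such that $f_n(s)\ge g_n(s)$ for all $n$ and $s\in\mathbb{S}$, and $$-\infty<\int_{\mathbb{S}}\limsup_{n\to\infty,\,s'\to s} g_n(s')\,\mu(ds)\le\liminf_{n\to\infty}\int_{\mathbb{S}} g_n(s)\,\mu_n(ds).$$ If the functions $\{g_n\}_{n=1,2,\ldots}$ are uniformly bounded from above (by one constant), then there exists $N\in\{0,1,2,\ldots\}$ such that $\{f_{n+N}^-\}_{n=1,2,\ldots}$ is uniformly integrable with respect to $\{\mu_{n+N}\}_{n=1,2,\ldots}$.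
   Context: Weak convergence: $\int f\,d\mu_n\to\int f\,d\mu$ for all bounded continuous $f$. $f^-=-\min\{f,0\}$. Integrals of extended-real functions are $\int f^+-\int f^-$, defined when one of these is finite; all integrals in the hypotheses are assumed defined. $\limsup_{n\to\infty,s'\to s}g_n(s'):=\inf_{n\ge1,\delta>0}\sup_{m\ge n,\,s'\in B_\delta(s)}g_m(s')$, with $B_\delta(s)$ the ball of radius $\delta$ around $s$. A sequence $\{h_n\}$ is uniformly integrable with respect to $\{\nu_n\}$ if $\lim_{K\to+\infty}\sup_{n}\int|h_n|\,\mathbf{1}\{|h_n|\ge K\}\,d\nu_n=0$. *)

theory Defs
  imports "HOL-Analysis.Analysis"
begin


definition integral_defined :: "'a measure \<Rightarrow> ('a \<Rightarrow> ereal) \<Rightarrow> bool" where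
  "integral_defined M f \<longleftrightarrow>
     (\<integral>\<^sup>+ x. e2ennreal (f x) \<partial>M) < \<infinity> \<or> (\<integral>\<^sup>+ x. e2ennreal (- f x) \<partial>M) < \<infinity>"

definition ext_integral :: "'a measure \<Rightarrow> ('a \<Rightarrow> ereal) \<Rightarrow> ereal" where
  "ext_integral M f =
     enn2ereal (\<integral>\<^sup>+ x. e2ennreal (f x) \<partial>M) - enn2ereal (\<integral>\<^sup>+ x. e2ennreal (- f x) \<partial>M)"

definition weak_conv :: "(nat \<Rightarrow> 'a::metric_space measure) \<Rightarrow> 'a measure \<Rightarrow> bool" where
  "weak_conv M \<mu> \<longleftrightarrow>
     (\<forall>f :: 'a \<Rightarrow> real. continuous_on UNIV f \<and> bounded (range f) \<longrightarrow>
        (\<forall>n. integral_defined (M n) (\<lambda>x. ereal (f x))) \<and>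
        (\<lambda>n. ext_integral (M n) (\<lambda>x. ereal (f x))) \<longlonglongrightarrow> ext_integral \<mu> (\<lambda>x. ereal (f x)))"

text \<open>limsup_{n\<rightarrow>\<infinity>, s'\<rightarrow>s} g_n(s') = inf_{n, \<delta>>0} sup_{m\<ge>n, s' \<in> ball s \<delta>} g_m(s')\<close>
definition joint_limsup :: "(nat \<Rightarrow> 'a::metric_space \<Rightarrow> ereal) \<Rightarrow> 'a \<Rightarrow> ereal" where
  "joint_limsup g s =
     (INF p \<in> {(n, \<delta>::real). \<delta> > 0}. SUP q \<in> {(m, s'). m \<ge> fst p \<and> s' \<in> ball s (snd p)}. g (fst q) (snd q))"

definition neg_part :: "('a \<Rightarrow> ereal) \<Rightarrow> 'a \<Rightarrow> ereal" where
  "neg_part f x = - min (f x) 0"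

definition unif_integrable :: "(nat \<Rightarrow> 'a \<Rightarrow> ereal) \<Rightarrow> (nat \<Rightarrow> 'a measure) \<Rightarrow> bool" where
  "unif_integrable h \<nu> \<longleftrightarrow>
     ((\<lambda>K::real. SUP n. \<integral>\<^sup>+ x. e2ennreal \<bar>h n x\<bar> * indicator {x. ereal K \<le> \<bar>h n x\<bar>} x \<partial>(\<nu> n))
        \<longlongrightarrow> 0) at_top"

end

theory Submission
  imports Defs
begin


lemma ext_integral_real:
  assumes "integrable M f"
  shows "ext_integral M (\<lambda>x. ereal (f x)) = ereal (integral\<^sup>L M f)"
proof -
  obtain r q where "0 \<le> r" "0 \<le> q"
    "(\<integral>\<^sup>+x. ennreal (f x)\<partial>M) = ennreal r"
    "(\<integral>\<^sup>+x. ennreal (-f x)\<partial>M) = ennreal q"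
    "integral\<^sup>L M f = r - q"
    using integrableE[OF assms] by metis
  then show ?thesis unfolding ext_integral_def by simp
qed

lemma ext_integral_const1:
  "ext_integral M (\<lambda>x. ereal 1) = enn2ereal (emeasure M (space M))"
  unfolding ext_integral_def by (simp add: nn_integral_const ennreal_neg zero_ennreal.rep_eq)

lemma trunc_pos:
  assumes "g \<le> ereal C" "0 \<le> K"
  shows "e2ennreal g = ennreal (real_of_ereal (max g (ereal (-K))))"
proof (cases g)
  case (real r)
  then show ?thesis using assms by (cases "r \<ge> -K") (auto simp: ennreal_neg)
qed (use assms in \<open>auto simp: ennreal_neg e2ennreal_neg\<close>)

lemma trunc_neg:
  assumes "g \<le> ereal C" "0 \<le> K"
  shows "e2ennreal (- g) = ennreal (- real_of_ereal (max g (ereal (-K)))) + e2ennreal (- g - ereal K)"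
proof (cases g)
  case (real r)
  show ?thesis
  proof (cases "r \<ge> -K")
    case True
    then show ?thesis using real assms by (auto simp: ennreal_neg)
  next
    case False
    then have "ennreal (-r) = ennreal K + ennreal (-r-K)" using assms
      by (subst ennreal_plus[symmetric]) auto
    then show ?thesis using real assms False by (auto simp: ennreal_neg)
  qed
qed (use assms in \<open>auto simp: ennreal_neg\<close>)

lemma split_trunc:
  assumes fm: "finite_measure M" and gm[measurable]: "g \<in> borel_measurable M"
    and gC: "\<And>x. g x \<le> ereal C" and K: "0 \<le> K"
    and fin: "(\<integral>\<^sup>+ x. e2ennreal (- g x) \<partial>M) < \<infinity>"
  shows "integrable M (\<lambda>x. real_of_ereal (max (g x) (ereal (-K))))"
    and "(\<integral>\<^sup>+ x. e2ennreal (- g x - ereal K) \<partial>M) < \<infinity>"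
    and "ext_integral M g = ereal (integral\<^sup>L M (\<lambda>x. real_of_ereal (max (g x) (ereal (-K))))
            - enn2real (\<integral>\<^sup>+ x. e2ennreal (- g x - ereal K) \<partial>M))"
proof -
  define \<phi> where "\<phi> = (\<lambda>x. real_of_ereal (max (g x) (ereal (-K))))"
  have bnd: "norm (\<phi> x) \<le> \<bar>C\<bar> + K" for x
  proof (cases "g x")
    case (real r)
    then have "r \<le> C" using gC[of x] by simp
    moreover have "\<phi> x = max r (-K)" unfolding \<phi>_def real by (simp add: max_def)
    ultimately show ?thesis using K by (simp add: abs_le_iff max_def; linarith)
  next
    case PInf
    then show ?thesis using gC[of x] by simp
  next
    case MInf
    then show ?thesis using K unfolding \<phi>_def by simp
  qed
  have int: "integrable M \<phi>"
    by (rule finite_measure.integrable_const_bound[OF fm, where B="\<bar>C\<bar> + K"])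
       (use bnd in \<open>auto simp: \<phi>_def\<close>)
  then show "integrable M (\<lambda>x. real_of_ereal (max (g x) (ereal (-K))))" by (simp add: \<phi>_def)
  have A: "(\<integral>\<^sup>+ x. e2ennreal (g x) \<partial>M) = (\<integral>\<^sup>+ x. ennreal (\<phi> x) \<partial>M)"
    by (intro nn_integral_cong) (simp add: \<phi>_def trunc_pos[OF gC K])
  have B: "(\<integral>\<^sup>+ x. e2ennreal (- g x) \<partial>M) = (\<integral>\<^sup>+ x. ennreal (- \<phi> x) \<partial>M) + (\<integral>\<^sup>+ x. e2ennreal (- g x - ereal K) \<partial>M)"
    by (subst nn_integral_add[symmetric]) (auto simp: \<phi>_def trunc_neg[OF gC K] intro!: nn_integral_cong)
  then show Dfin: "(\<integral>\<^sup>+ x. e2ennreal (- g x - ereal K) \<partial>M) < \<infinity>"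
    using fin by (auto simp: top_unique)
  obtain r q where rq: "0 \<le> r" "0 \<le> q"
    "(\<integral>\<^sup>+x. ennreal (\<phi> x)\<partial>M) = ennreal r"
    "(\<integral>\<^sup>+x. ennreal (-\<phi> x)\<partial>M) = ennreal q"
    "integral\<^sup>L M \<phi> = r - q"
    using integrableE[OF int] by metis
  obtain d where d: "0 \<le> d" "(\<integral>\<^sup>+ x. e2ennreal (- g x - ereal K) \<partial>M) = ennreal d"
    using Dfin by (cases "(\<integral>\<^sup>+ x. e2ennreal (- g x - ereal K) \<partial>M)") auto
  have "ext_integral M g = enn2ereal (ennreal r) - enn2ereal (ennreal (q + d))"
    unfolding ext_integral_def A B rq d using rq d by (simp add: ennreal_plus)
  also have "\<dots> = ereal (integral\<^sup>L M \<phi> - enn2real (\<integral>\<^sup>+ x. e2ennreal (- g x - ereal K) \<partial>M))"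
    using rq d by (simp del: ennreal_plus)
  finally show "ext_integral M g = ereal (integral\<^sup>L M (\<lambda>x. real_of_ereal (max (g x) (ereal (-K))))
            - enn2real (\<integral>\<^sup>+ x. e2ennreal (- g x - ereal K) \<partial>M))" by (simp add: \<phi>_def)
qed



lemma e2_minus_mono:
  assumes "K \<le> K'"
  shows "e2ennreal (a - ereal K') \<le> e2ennreal (a - ereal K)"
  by (rule e2ennreal_mono) (cases a, use assms in auto)

lemma tail0:
  assumes hm[measurable]: "h \<in> borel_measurable M"
    and fin: "(\<integral>\<^sup>+ x. e2ennreal (- h x) \<partial>M) < \<infinity>" and e: "0 < \<epsilon>"
  shows "\<exists>K::nat. (\<integral>\<^sup>+ x. e2ennreal (- h x - ereal (real K)) \<partial>M) < \<epsilon>"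
proof -
  define F where "F = (\<lambda>(K::nat) x. e2ennreal (- h x - ereal (real K)))"
  have dec: "decseq F"
    by (intro decseq_SucI le_funI) (auto simp: F_def intro: e2_minus_mono)
  have Fm: "F i \<in> borel_measurable M" for i unfolding F_def by measurable
  have F0: "(\<integral>\<^sup>+ x. F 0 x \<partial>M) < \<infinity>" using fin by (simp add: F_def)
  have eq: "(\<integral>\<^sup>+ x. (INF i. F i x) \<partial>M) = (INF i. integral\<^sup>N M (F i))"
    by (rule nn_integral_monotone_convergence_INF_decseq[OF dec Fm F0])
  have "AE x in M. e2ennreal (- h x) \<noteq> \<infinity>"
    by (rule nn_integral_PInf_AE) (use fin in auto)
  then have "AE x in M. (INF i. F i x) = 0"
  proof eventually_elim
    case (elim x)
    show ?case
    proof (cases "h x")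
      case (real r)
      obtain n :: nat where "-r \<le> real n" using real_arch_simple by blast
      then have "F n x = 0" unfolding F_def real by (auto simp: ennreal_neg)
      then show ?thesis by (metis INF_lower UNIV_I le_zero_eq)
    next
      case PInf
      then have "F 0 x = 0" unfolding F_def by (simp add: e2ennreal_neg)
      then show ?thesis by (metis INF_lower UNIV_I le_zero_eq)
    next
      case MInf
      then show ?thesis using elim by simp
    qed
  qed
  then have "(\<integral>\<^sup>+ x. (INF i. F i x) \<partial>M) = 0"
    by (simp add: nn_integral_cong_AE)
  then have "(INF i. integral\<^sup>N M (F i)) < \<epsilon>" using eq e by simp
  then show ?thesis unfolding F_def by (simp add: INF_less_iff)
qed

lemma ui_point:
  assumes "g \<le> f" "0 \<le> K" "2*K \<le> K'" "0 < K'"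
  shows "e2ennreal \<bar>- min f 0\<bar> * indicator {x. ereal K' \<le> \<bar>- min f 0\<bar>} y \<le> 2 * e2ennreal (- g - ereal K)"
proof (cases "ereal K' \<le> \<bar>- min f 0\<bar>")
  case False
  then show ?thesis by simp
next
  case True
  then have fneg: "f \<le> - ereal K'" using assms
    by (cases f) (auto simp: min_def split: if_splits)
  then have fm: "\<bar>- min f 0\<bar> = - f" using assms by (cases f) (auto simp: min_def)
  show ?thesis
  proof (cases g)
    case (real b)
    then obtain a where a: "f = ereal a" using assms fneg by (cases f) auto
    have ab: "a \<le> - K'" "b \<le> a" using a real fneg assms by auto
    have "- a \<le> 2 * (- b - K)" using ab assms(2,3) by (simp add: algebra_simps)
    then have "ennreal (- a) \<le> ennreal (2 * (- b - K))"
      by (intro ennreal_leI)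
    also have "\<dots> = ennreal 2 * ennreal (- b - K)" by (rule ennreal_mult') simp
    also have "\<dots> = 2 * ennreal (- b - K)" by simp
    finally show ?thesis using a real fm by simp
  next
    case PInf
    then show ?thesis using assms fneg by simp
  next
    case MInf
    then show ?thesis by simp
  qed
qed



definition Wsup :: "(nat \<Rightarrow> 'a::metric_space \<Rightarrow> ereal) \<Rightarrow> nat \<Rightarrow> 'a \<Rightarrow> ereal" where
  "Wsup g m s = (SUP q \<in> {(k, s'). k \<ge> m \<and> s' \<in> ball s (1 / real (Suc m))}. g (fst q) (snd q))"

lemma Wsup_upper: "m \<le> k \<Longrightarrow> dist s t < 1 / real (Suc m) \<Longrightarrow> g k t \<le> Wsup g m s"
  unfolding Wsup_def by (rule SUP_upper2[of "(k, t)"]) auto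

lemma Wsup_le: "(\<And>k t. g k t \<le> c) \<Longrightarrow> Wsup g m s \<le> c"
  unfolding Wsup_def by (rule SUP_least) auto

lemma Wsup_dec: "m \<le> m' \<Longrightarrow> Wsup g m' s \<le> Wsup g m s"
proof -
  assume "m \<le> m'"
  then have "1 / real (Suc m') \<le> 1 / real (Suc m)" by (simp add: frac_le)
  then show ?thesis using \<open>m \<le> m'\<close> unfolding Wsup_def
    by (intro SUP_subset_mono) auto
qed

lemma joint_limsup_Wsup: "joint_limsup g s = (INF m. Wsup g m s)"
proof (rule antisym)
  show "joint_limsup g s \<le> (INF m. Wsup g m s)"
  proof (rule INF_greatest)
    fix m :: nat
    show "joint_limsup g s \<le> Wsup g m s"
      unfolding joint_limsup_def Wsup_def
      by (rule INF_lower2[of "(m, 1 / real (Suc m))"]) auto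
  qed
next
  show "(INF m. Wsup g m s) \<le> joint_limsup g s"
    unfolding joint_limsup_def
  proof (rule INF_greatest)
    fix p :: "nat \<times> real" assume "p \<in> {(n, \<delta>). \<delta> > 0}"
    then obtain n \<delta> where p: "p = (n, \<delta>)" "\<delta> > 0" by auto
    obtain m0 :: nat where m0: "inverse (real (Suc m0)) < \<delta>" using reals_Archimedean[OF \<open>\<delta> > 0\<close>] by auto
    define m where "m = max n m0"
    have "1 / real (Suc m) \<le> 1 / real (Suc m0)" by (simp add: m_def frac_le)
    then have sub: "1 / real (Suc m) < \<delta>" using m0 by (simp add: inverse_eq_divide)
    have "(INF m. Wsup g m s) \<le> Wsup g m s" by (rule INF_lower) simp
    also have "\<dots> \<le> (SUP q \<in> {(m', s'). m' \<ge> fst p \<and> s' \<in> ball s (snd p)}. g (fst q) (snd q))"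
      unfolding Wsup_def p using sub by (intro SUP_subset_mono) (auto simp: m_def)
    finally show "(INF m. Wsup g m s) \<le> (SUP q \<in> {(m', s'). m' \<ge> fst p \<and> s' \<in> ball s (snd p)}. g (fst q) (snd q))" .
  qed
qed

lemma Wsup_open: "open {s. a < Wsup g m s}"
proof -
  have "{s. a < Wsup g m s} = (\<Union>q\<in>{(k,t). k \<ge> m \<and> a < g k t}. ball (snd q) (1 / real (Suc m)))"
    unfolding Wsup_def by (auto simp: less_SUP_iff dist_commute; blast)
  then show ?thesis by auto
qed

lemma Wsup_meas[measurable]: "Wsup g m \<in> borel_measurable borel"
  by (rule borel_measurableI_greater) (simp add: Wsup_open)

lemma joint_limsup_meas[measurable]: "joint_limsup g \<in> borel_measurable borel"
proof -
  have "joint_limsup g = (\<lambda>s. INF m. Wsup g m s)" by (simp add: fun_eq_iff joint_limsup_Wsup)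
  also have "\<dots> \<in> borel_measurable borel" by measurable
  finally show ?thesis .
qed



lemma fin_ereal: "ereal a \<le> x \<Longrightarrow> x \<le> ereal b \<Longrightarrow> ereal (real_of_ereal x) = x"
  by (cases x) auto

lemma real_of_ereal_mono_fin: "x \<le> y \<Longrightarrow> ereal a \<le> x \<Longrightarrow> y \<le> ereal b \<Longrightarrow> real_of_ereal x \<le> real_of_ereal y"
  by (cases x; cases y) auto

lemma lip_approx:
  fixes g :: "nat \<Rightarrow> 'a::metric_space \<Rightarrow> ereal"
  assumes gC: "\<And>n s. g n s \<le> ereal C" and K: "0 \<le> K" and C: "0 \<le> C"
  shows "\<exists>\<psi> :: 'a \<Rightarrow> real. continuous_on UNIV \<psi> \<and> (\<forall>s. -K \<le> \<psi> s \<and> \<psi> s \<le> C) \<and>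
      (\<forall>n\<ge>m. \<forall>s. real_of_ereal (max (g n s) (ereal (-K))) \<le> \<psi> s) \<and>
      (\<forall>s. ereal (\<psi> s) \<le> max (ereal (C - real (Suc m))) (max (Wsup g m s) (ereal (-K))))"
proof -
  define E where "E t = max (SUP k\<in>{m..}. g k t) (ereal (-K))" for t
  have E1: "ereal (-K) \<le> E t" for t unfolding E_def by simp
  have E2: "E t \<le> ereal C" for t unfolding E_def using K C by (auto intro!: SUP_least gC)
  define Er where "Er t = real_of_ereal (E t)" for t
  have Er: "ereal (Er t) = E t" for t unfolding Er_def using E1 E2 by (rule fin_ereal)
  have Er1: "-K \<le> Er t" "Er t \<le> C" for t using E1[of t] E2[of t] Er[of t] by (metis ereal_less_eq(3))+
  define L where "L = real (Suc m) * real (Suc m)"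
  have L0: "0 \<le> L" by (simp add: L_def)
  define \<psi> where "\<psi> s = (SUP t. Er t - L * dist s t)" for s
  have bdd: "bdd_above (range (\<lambda>t. Er t - L * dist s t))" for s
  proof (rule bdd_aboveI2[where M=C])
    fix t
    have "0 \<le> L * dist s t" using L0 by simp
    then show "Er t - L * dist s t \<le> C" using Er1(2)[of t] by linarith
  qed
  have lo: "Er s \<le> \<psi> s" for s
    unfolding \<psi>_def by (rule cSUP_upper2[OF bdd, of s]) auto
  have hi: "\<psi> s \<le> C" for s
    unfolding \<psi>_def
  proof (rule cSUP_least)
    fix t
    have "0 \<le> L * dist s t" using L0 by simp
    then show "Er t - L * dist s t \<le> C" using Er1(2)[of t] by linarith
  qed simp
  have lip1: "\<psi> s \<le> \<psi> s' + L * dist s s'" for s s'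
  proof -
    have "\<psi> s - L * dist s s' \<le> \<psi> s'"
    proof -
      have "\<psi> s \<le> \<psi> s' + L * dist s s'"
        unfolding \<psi>_def
      proof (rule cSUP_least)
        fix t
        have "dist s' t \<le> dist s s' + dist s t"
          by (metis dist_commute dist_triangle)
        then have "L * dist s' t \<le> L * dist s s' + L * dist s t"
          using L0 by (metis distrib_left mult_left_mono)
        moreover have "Er t - L * dist s' t \<le> (SUP t. Er t - L * dist s' t)"
          by (rule cSUP_upper[OF _ bdd]) simp
        ultimately show "Er t - L * dist s t \<le> (SUP t. Er t - L * dist s' t) + L * dist s s'"
          by linarith
      qed simp
      then show ?thesis by simp
    qed
    then show ?thesis by simp
  qed
  have lip: "L-lipschitz_on UNIV \<psi>"
  proof (rule lipschitz_onI)
    fix x y :: 'a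
    show "dist (\<psi> x) (\<psi> y) \<le> L * dist x y"
      using lip1[of x y] lip1[of y x] by (simp add: dist_real_def dist_commute abs_le_iff)
  qed (rule L0)
  have cont: "continuous_on UNIV \<psi>" by (rule lipschitz_on_continuous_on[OF lip])
  have bounds: "\<forall>s. -K \<le> \<psi> s \<and> \<psi> s \<le> C" using lo hi Er1 by (meson order_trans)
  have below: "\<forall>n\<ge>m. \<forall>s. real_of_ereal (max (g n s) (ereal (-K))) \<le> \<psi> s"
  proof (intro allI impI)
    fix n s assume "m \<le> n"
    then have "max (g n s) (ereal (-K)) \<le> E s"
      unfolding E_def by (intro max.mono SUP_upper) auto
    then have "real_of_ereal (max (g n s) (ereal (-K))) \<le> real_of_ereal (E s)"
      by (rule real_of_ereal_mono_fin[OF _ _ E2, where a="-K"]) simp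
    then show "real_of_ereal (max (g n s) (ereal (-K))) \<le> \<psi> s"
      using lo[of s] by (simp add: Er_def)
  qed
  have above: "ereal (\<psi> s) \<le> max (ereal (C - real (Suc m))) (max (Wsup g m s) (ereal (-K)))" for s
  proof -
    define U where "U = max (ereal (C - real (Suc m))) (max (Wsup g m s) (ereal (-K)))"
    have U1: "ereal (-K) \<le> U" unfolding U_def by (intro max.coboundedI2) simp
    have U2: "U \<le> ereal C" unfolding U_def using K C by (auto intro: Wsup_le gC)
    define u where "u = real_of_ereal U"
    have u: "ereal u = U" unfolding u_def using U1 U2 by (rule fin_ereal)
    have "\<psi> s \<le> u"
      unfolding \<psi>_def
    proof (rule cSUP_least)
      fix t
      show "Er t - L * dist s t \<le> u"
      proof (cases "dist s t < 1 / real (Suc m)")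
        case True
        have "(SUP k\<in>{m..}. g k t) \<le> Wsup g m s"
          by (rule SUP_least) (use True in \<open>auto intro: Wsup_upper\<close>)
        then have "E t \<le> max (Wsup g m s) (ereal (-K))" unfolding E_def by (rule max.mono) simp
        then have "E t \<le> U" unfolding U_def by (rule max.coboundedI2)
        then have "Er t \<le> u" using Er[of t] u by (metis ereal_less_eq(3))
        then show ?thesis using L0 by (smt (verit) mult_nonneg_nonneg zero_le_dist)
      next
        case False
        then have "1 \<le> real (Suc m) * dist s t" by (simp add: field_simps)
        then have "real (Suc m) \<le> L * dist s t" unfolding L_def
          by (metis mult.assoc mult.right_neutral mult_left_mono of_nat_0_le_iff)
        moreover have "ereal (C - real (Suc m)) \<le> U" unfolding U_def by simp
        then have "C - real (Suc m) \<le> u" using u by (metis ereal_less_eq(3))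
        ultimately show ?thesis using Er1(2)[of t] by linarith
      qed
    qed simp
    then have "ereal (\<psi> s) \<le> ereal u" by simp
    then show ?thesis using u by (simp only: U_def)
  qed
  show ?thesis using cont bounds below above by blast
qed



lemma fm_integrable:
  assumes "finite_measure M" "f \<in> borel_measurable M" "\<And>x. a \<le> f x \<and> f x \<le> (b::real)"
  shows "integrable M f"
proof (rule finite_measure.integrable_const_bound[OF assms(1), where B="\<bar>a\<bar> + \<bar>b\<bar>"])
  show "AE x in M. norm (f x) \<le> \<bar>a\<bar> + \<bar>b\<bar>"
  proof (rule AE_I2)
    fix x
    show "norm (f x) \<le> \<bar>a\<bar> + \<bar>b\<bar>" using assms(3)[of x] by (simp add: abs_le_iff; linarith)
  qed
qed (rule assms(2))

lemma neg_fin: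
  assumes fm: "finite_measure M" and hC: "\<And>x. h x \<le> ereal C" and lo: "- \<infinity> < ext_integral M h"
  shows "(\<integral>\<^sup>+ x. e2ennreal (- h x) \<partial>M) < \<infinity>"
proof (rule ccontr)
  assume "\<not> ?thesis"
  then have inf: "(\<integral>\<^sup>+ x. e2ennreal (- h x) \<partial>M) = \<infinity>" by (simp add: less_top[symmetric])
  have "(\<integral>\<^sup>+ x. e2ennreal (h x) \<partial>M) \<le> (\<integral>\<^sup>+ x. ennreal C \<partial>M)"
    by (intro nn_integral_mono) (metis e2ennreal_ereal e2ennreal_mono hC)
  also have "\<dots> = ennreal C * emeasure M (space M)" by (simp add: nn_integral_const)
  also have "\<dots> < \<infinity>" using finite_measure.emeasure_finite[OF fm]
    by (simp add: ennreal_mult_less_top less_top)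
  finally have afin: "(\<integral>\<^sup>+ x. e2ennreal (h x) \<partial>M) < \<infinity>" .
  then obtain r where "enn2ereal (\<integral>\<^sup>+ x. e2ennreal (h x) \<partial>M) = ereal r"
    by (cases "enn2ereal (\<integral>\<^sup>+ x. e2ennreal (h x) \<partial>M)") (auto simp: less_top)
  then have "ext_integral M h = - \<infinity>" unfolding ext_integral_def inf by simp
  then show False using lo by simp
qed



lemma Lf_le:
  "(INF m. max (ereal (C - real (Suc m))) (max (Wsup g m s) (ereal (-K)))) \<le> max (joint_limsup g s) (ereal (-K))"
proof (rule dense_ge)
  fix y assume y: "max (joint_limsup g s) (ereal (-K)) < y"
  then have y1: "joint_limsup g s < y" "ereal (-K) < y" by auto
  from y1(1) obtain m0 where m0: "Wsup g m0 s < y" by (auto simp: joint_limsup_Wsup INF_less_iff)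
  show "(INF m. max (ereal (C - real (Suc m))) (max (Wsup g m s) (ereal (-K)))) \<le> y"
  proof (cases y)
    case PInf
    then show ?thesis by simp
  next
    case MInf
    then show ?thesis using y1(2) by simp
  next
    case (real r)
    obtain m1 :: nat where m1: "C - r \<le> real m1" using real_arch_simple by blast
    define m where "m = max m0 m1"
    have "C - real (Suc m) < r" using m1 by (simp add: m_def)
    then have a: "ereal (C - real (Suc m)) \<le> y" using real by simp
    have "Wsup g m s \<le> Wsup g m0 s" by (rule Wsup_dec) (simp add: m_def)
    then have b: "Wsup g m s \<le> y" using m0 by simp
    have "max (ereal (C - real (Suc m))) (max (Wsup g m s) (ereal (-K))) \<le> y"
      using a b y1(2) by simp
    then show ?thesis by (rule INF_lower2[rotated]) simp
  qed
qed

lemma ui_point2: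
  assumes "G x \<le> F x" "0 \<le> K" "2*K \<le> K'" "0 < K'"
  shows "e2ennreal \<bar>- min (F x) 0\<bar> * indicator {x. ereal K' \<le> \<bar>- min (F x) 0\<bar>} x \<le> 2 * e2ennreal (- G x - ereal K)"
proof -
  have "(indicator {x. ereal K' \<le> \<bar>- min (F x) 0\<bar>} x :: ennreal) = indicator {y. ereal K' \<le> \<bar>- min (F x) 0\<bar>} x"
    by (simp add: indicator_def)
  then show ?thesis using ui_point[OF assms, of x] by simp
qed

theorem theorem2p6:
  fixes M :: "nat \<Rightarrow> 'a::metric_space measure" and \<mu> :: "'a measure"
    and f g :: "nat \<Rightarrow> 'a \<Rightarrow> ereal"
  assumes sets_M: "\<And>n. sets (M n) = sets borel"
    and sets_mu: "sets \<mu> = sets borel"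
    and fin: "finite_measure \<mu>"
    and weak: "weak_conv M \<mu>"
    and f_meas: "\<And>n. f n \<in> borel_measurable borel"
    and g_meas: "\<And>n. g n \<in> borel_measurable borel"
    and fg: "\<And>n s. f n s \<ge> g n s"
    and def_lim: "integral_defined \<mu> (joint_limsup g)"
    and def_g: "\<And>n. integral_defined (M n) (g n)"
    and lower: "- \<infinity> < ext_integral \<mu> (joint_limsup g)"
    and ineq: "ext_integral \<mu> (joint_limsup g) \<le> liminf (\<lambda>n. ext_integral (M n) (g n))"
    and bdd: "\<exists>C::real. \<forall>n s. g n s \<le> ereal C"
  shows "\<exists>N::nat. unif_integrable (\<lambda>n. neg_part (f (n + N))) (\<lambda>n. M (n + N))"
proof -
  obtain C0 :: real where C0: "\<And>n s. g n s \<le> ereal C0" using bdd by blast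
  define C where "C = max C0 0"
  have C: "0 \<le> C" by (simp add: C_def)
  have gC: "g n s \<le> ereal C" for n s using C0[of n s] by (simp add: C_def max.coboundedI1)
  have measM: "h \<in> borel_measurable (M n)" if "h \<in> borel_measurable borel" for h :: "'a \<Rightarrow> 'b::topological_space" and n
    using that by (subst measurable_cong_sets[OF sets_M[of n] refl])
  have measmu: "h \<in> borel_measurable \<mu>" if "h \<in> borel_measurable borel" for h :: "'a \<Rightarrow> 'b::topological_space"
    using that by (subst measurable_cong_sets[OF sets_mu refl])
  have gM: "g n \<in> borel_measurable (M n)" for n by (rule measM[OF g_meas])
  define gs where "gs = joint_limsup g"
  have gs_meas: "gs \<in> borel_measurable \<mu>" unfolding gs_def by (rule measmu) measurable
  have gsC: "gs s \<le> ereal C" for s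
    unfolding gs_def joint_limsup_Wsup by (rule INF_lower2[of 0]) (auto intro: Wsup_le gC)
  have wk: "(\<lambda>n. ext_integral (M n) (\<lambda>x. ereal (\<psi> x))) \<longlonglongrightarrow> ext_integral \<mu> (\<lambda>x. ereal (\<psi> x))"
    if "continuous_on UNIV \<psi>" "bounded (range \<psi>)" for \<psi> :: "'a \<Rightarrow> real"
    using weak that unfolding weak_conv_def by blast
  have gs_negfin: "(\<integral>\<^sup>+ x. e2ennreal (- gs x) \<partial>\<mu>) < \<infinity>"
    by (rule neg_fin[OF fin gsC]) (use lower in \<open>simp add: gs_def\<close>)
  obtain \<gamma> where \<gamma>: "ext_integral \<mu> gs = ereal \<gamma>"
    using split_trunc(3)[OF fin gs_meas gsC order_refl gs_negfin] by blast
  have liminf: "ereal \<gamma> \<le> liminf (\<lambda>n. ext_integral (M n) (g n))" using ineq \<gamma> by (simp add: gs_def)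
  have ev1: "eventually (\<lambda>n. finite_measure (M n)) sequentially"
  proof -
    have "(\<lambda>n. ext_integral (M n) (\<lambda>x. ereal 1)) \<longlonglongrightarrow> ext_integral \<mu> (\<lambda>x. ereal 1)"
      by (rule wk) (auto intro: boundedI[where B=1])
    moreover have "ext_integral \<mu> (\<lambda>x. ereal 1) < \<infinity>"
      using finite_measure.emeasure_finite[OF fin] by (simp add: ext_integral_const1 less_top)
    ultimately have "eventually (\<lambda>n. ext_integral (M n) (\<lambda>x. ereal 1) < \<infinity>) sequentially"
      by (rule order_tendstoD(2))
    then show ?thesis
      by eventually_elim (auto simp: ext_integral_const1 intro!: finite_measureI)
  qed
  have ev2: "eventually (\<lambda>n. ereal (\<gamma> - 1) < ext_integral (M n) (g n)) sequentially"
  proof (rule less_LiminfD)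
    have "ereal (\<gamma> - 1) < ereal \<gamma>" by simp
    then show "ereal (\<gamma> - 1) < liminf (\<lambda>n. ext_integral (M n) (g n))" using liminf by (rule less_le_trans)
  qed
  obtain N where N: "\<And>n. N \<le> n \<Longrightarrow> finite_measure (M n) \<and> ereal (\<gamma> - 1) < ext_integral (M n) (g n)"
    using eventually_conj[OF ev1 ev2] unfolding eventually_sequentially by blast
  have negfin: "(\<integral>\<^sup>+ x. e2ennreal (- g n x) \<partial>M n) < \<infinity>" if "N \<le> n" for n
    by (rule neg_fin[where C=C]) (use N[OF that] gC in \<open>auto intro: less_trans[rotated]\<close>)
  define D where "D n K = (\<integral>\<^sup>+ x. e2ennreal (- g n x - ereal K) \<partial>M n)" for n K
  have Dmono: "D n K' \<le> D n K" if "K \<le> K'" for n K K'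
    unfolding D_def by (intro nn_integral_mono e2_minus_mono that)
  have TAIL: "\<exists>K\<ge>0. \<exists>n1. \<forall>n\<ge>n1. N \<le> n \<and> D n K \<le> ennreal (4*\<epsilon>)" if e: "0 < \<epsilon>" for \<epsilon>
  proof -
    obtain Kn :: nat where Kn: "(\<integral>\<^sup>+ x. e2ennreal (- gs x - ereal (real Kn)) \<partial>\<mu>) < ennreal \<epsilon>"
      using tail0[OF gs_meas gs_negfin, of "ennreal \<epsilon>"] e by auto
    define K where "K = real Kn"
    have K0: "0 \<le> K" by (simp add: K_def)
    define \<phi>s where "\<phi>s = (\<lambda>x. real_of_ereal (max (gs x) (ereal (-K))))"
    define ds where "ds = enn2real (\<integral>\<^sup>+ x. e2ennreal (- gs x - ereal K) \<partial>\<mu>)"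
    have \<phi>s_int: "integrable \<mu> \<phi>s"
      using split_trunc(1)[OF fin gs_meas gsC K0 gs_negfin] by (simp add: \<phi>s_def)
    have \<gamma>eq: "\<gamma> = integral\<^sup>L \<mu> \<phi>s - ds"
      using split_trunc(3)[OF fin gs_meas gsC K0 gs_negfin] \<gamma> by (simp add: \<phi>s_def ds_def)
    have ds: "ds \<le> \<epsilon>"
    proof -
      have "ds \<le> enn2real (ennreal \<epsilon>)" unfolding ds_def
        by (rule enn2real_mono) (use Kn in \<open>auto simp: K_def\<close>)
      then show ?thesis using e by simp
    qed
    define U where "U = (\<lambda>m s. max (ereal (C - real (Suc m))) (max (Wsup g m s) (ereal (-K))))"
    have U1: "ereal (-K) \<le> U m s" for m s unfolding U_def by (intro max.coboundedI2) simp
    have U2: "U m s \<le> ereal C" for m s unfolding U_def using K0 C by (auto intro: Wsup_le gC)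
    define Ur where "Ur = (\<lambda>m s. real_of_ereal (U m s))"
    have Ur: "ereal (Ur m s) = U m s" for m s unfolding Ur_def using U1 U2 by (rule fin_ereal)
    have Urb: "-K \<le> Ur m s \<and> Ur m s \<le> C" for m s using U1[of m s] U2[of m s] Ur[of m s] by (metis ereal_less_eq(3))
    have Ur_meas: "Ur m \<in> borel_measurable \<mu>" for m
      by (rule measmu) (unfold Ur_def U_def, measurable)
    define Lf where "Lf = (\<lambda>s. INF m. U m s)"
    have Lf1: "ereal (-K) \<le> Lf s" for s unfolding Lf_def by (rule INF_greatest) (rule U1)
    have Lf2: "Lf s \<le> ereal C" for s unfolding Lf_def by (rule INF_lower2[of 0]) (auto intro: U2)
    define Lr where "Lr = (\<lambda>s. real_of_ereal (Lf s))"
    have Lr: "ereal (Lr s) = Lf s" for s unfolding Lr_def using Lf1 Lf2 by (rule fin_ereal)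
    have Lrb: "-K \<le> Lr s \<and> Lr s \<le> C" for s using Lf1[of s] Lf2[of s] Lr[of s] by (metis ereal_less_eq(3))
    have Lr_meas: "Lr \<in> borel_measurable \<mu>"
      by (rule measmu) (unfold Lr_def Lf_def U_def, measurable)
    have dec: "decseq (\<lambda>m. U m s)" for s
    proof (rule decseq_SucI)
      fix m
      show "U (Suc m) s \<le> U m s" unfolding U_def
        by (intro max.mono Wsup_dec) auto
    qed
    have conv: "(\<lambda>m. Ur m s) \<longlonglongrightarrow> Lr s" for s
    proof -
      have "(\<lambda>m. U m s) \<longlonglongrightarrow> ereal (Lr s)" using LIMSEQ_INF[OF dec[of s]] Lr[of s] by (simp add: Lf_def)
      then show ?thesis unfolding Ur_def by (rule lim_real_of_ereal)
    qed
    have int_conv: "(\<lambda>m. integral\<^sup>L \<mu> (Ur m)) \<longlonglongrightarrow> integral\<^sup>L \<mu> Lr"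
    proof (rule integral_dominated_convergence[where w="\<lambda>_. C + K"])
      show "integrable \<mu> (\<lambda>_. C + K)" using fin by (simp add: finite_measure.integrable_const)
      show "AE x in \<mu>. (\<lambda>i. Ur i x) \<longlonglongrightarrow> Lr x" using conv by simp
      show "AE x in \<mu>. norm (Ur i x) \<le> C + K" for i
        using Urb by (auto simp: abs_le_iff intro!: AE_I2) (smt (verit) Urb C K0)+
    qed (use Lr_meas Ur_meas in auto)
    have "eventually (\<lambda>m. integral\<^sup>L \<mu> (Ur m) < integral\<^sup>L \<mu> Lr + \<epsilon>) sequentially"
      by (rule order_tendstoD(2)[OF int_conv]) (use e in simp)
    then obtain m where m: "integral\<^sup>L \<mu> (Ur m) < integral\<^sup>L \<mu> Lr + \<epsilon>"
      unfolding eventually_sequentially by blast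
    have LrLe: "Lr s \<le> \<phi>s s" for s
    proof -
      have "Lf s \<le> max (gs s) (ereal (-K))" unfolding Lf_def U_def gs_def by (rule Lf_le)
      then show ?thesis unfolding Lr_def \<phi>s_def
        by (rule real_of_ereal_mono_fin[OF _ Lf1, where b=C]) (use gsC[of s] C K0 in simp)
    qed
    have Lr_int: "integrable \<mu> Lr" by (rule fm_integrable[OF fin Lr_meas Lrb])
    have int_Lr: "integral\<^sup>L \<mu> Lr \<le> integral\<^sup>L \<mu> \<phi>s"
      by (rule integral_mono[OF Lr_int \<phi>s_int LrLe])
    obtain \<psi> :: "'a \<Rightarrow> real" where cont: "continuous_on UNIV \<psi>" and \<psi>b: "\<And>s. -K \<le> \<psi> s \<and> \<psi> s \<le> C"
      and below: "\<And>n s. m \<le> n \<Longrightarrow> real_of_ereal (max (g n s) (ereal (-K))) \<le> \<psi> s"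
      and above: "\<And>s. ereal (\<psi> s) \<le> U m s"
      using lip_approx[where g=g and C=C and K=K and m=m, OF gC K0 C] unfolding U_def by blast
    have \<psi>_meas: "\<psi> \<in> borel_measurable borel" by (rule borel_measurable_continuous_onI[OF cont])
    have \<psi>_Ur: "\<psi> s \<le> Ur m s" for s using above[of s] Ur[of m s] by (metis ereal_less_eq(3))
    have \<psi>_int: "integrable \<mu> \<psi>" by (rule fm_integrable[OF fin measmu[OF \<psi>_meas] \<psi>b])
    have Ur_int: "integrable \<mu> (Ur m)" by (rule fm_integrable[OF fin Ur_meas Urb])
    have int_\<psi>: "integral\<^sup>L \<mu> \<psi> \<le> integral\<^sup>L \<mu> (Ur m)"
      by (rule integral_mono[OF \<psi>_int Ur_int \<psi>_Ur])
    have bdd\<psi>: "bounded (range \<psi>)"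
    proof (rule boundedI[where B="C + K"])
      fix x assume "x \<in> range \<psi>"
      then obtain s where "x = \<psi> s" by auto
      then show "norm x \<le> C + K" using \<psi>b[of s] C K0 by (simp add: abs_le_iff)
    qed
    have "(\<lambda>n. ext_integral (M n) (\<lambda>x. ereal (\<psi> x))) \<longlonglongrightarrow> ereal (integral\<^sup>L \<mu> \<psi>)"
      using wk[OF cont bdd\<psi>] ext_integral_real[OF \<psi>_int] by simp
    then have ev3: "eventually (\<lambda>n. ext_integral (M n) (\<lambda>x. ereal (\<psi> x)) < ereal (integral\<^sup>L \<mu> \<psi> + \<epsilon>)) sequentially"
      by (rule order_tendstoD(2)) (use e in simp)
    have ev4: "eventually (\<lambda>n. ereal (\<gamma> - \<epsilon>) < ext_integral (M n) (g n)) sequentially"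
    proof (rule less_LiminfD)
      have "ereal (\<gamma> - \<epsilon>) < ereal \<gamma>" using e by simp
      then show "ereal (\<gamma> - \<epsilon>) < liminf (\<lambda>n. ext_integral (M n) (g n))" using liminf by (rule less_le_trans)
    qed
    obtain n2 where n2: "\<And>n. n2 \<le> n \<Longrightarrow> ext_integral (M n) (\<lambda>x. ereal (\<psi> x)) < ereal (integral\<^sup>L \<mu> \<psi> + \<epsilon>)
        \<and> ereal (\<gamma> - \<epsilon>) < ext_integral (M n) (g n)"
      using eventually_conj[OF ev3 ev4] unfolding eventually_sequentially by blast
    have "N \<le> n \<and> D n K \<le> ennreal (4*\<epsilon>)" if n: "max n2 (max N m) \<le> n" for n
    proof -
      have nN: "N \<le> n" using n by simp
      have fmn: "finite_measure (M n)" using N[OF nN] by simp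
      note st = split_trunc[OF fmn gM gC K0 negfin[OF nN]]
      define \<phi>n where "\<phi>n = (\<lambda>x. real_of_ereal (max (g n x) (ereal (-K))))"
      define dn where "dn = enn2real (D n K)"
      have \<phi>n_int: "integrable (M n) \<phi>n" using st(1) by (simp add: \<phi>n_def)
      have Dfin: "D n K < \<infinity>" using st(2) by (simp add: D_def)
      have exn: "ext_integral (M n) (g n) = ereal (integral\<^sup>L (M n) \<phi>n - dn)"
        using st(3) by (simp add: \<phi>n_def dn_def D_def)
      have \<psi>n_int: "integrable (M n) \<psi>" by (rule fm_integrable[OF fmn measM[OF \<psi>_meas] \<psi>b])
      have exs: "ext_integral (M n) (\<lambda>x. ereal (\<psi> x)) = ereal (integral\<^sup>L (M n) \<psi>)"
        by (rule ext_integral_real[OF \<psi>n_int])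
      have le1: "integral\<^sup>L (M n) \<phi>n \<le> integral\<^sup>L (M n) \<psi>"
        by (rule integral_mono[OF \<phi>n_int \<psi>n_int]) (use below n in \<open>auto simp: \<phi>n_def\<close>)
      have r1: "\<gamma> - \<epsilon> < integral\<^sup>L (M n) \<phi>n - dn" using n2[of n] n exn by simp
      have r2: "integral\<^sup>L (M n) \<psi> < integral\<^sup>L \<mu> \<psi> + \<epsilon>" using n2[of n] n exs by simp
      have "dn \<le> 4 * \<epsilon>" using r1 r2 le1 int_\<psi> m int_Lr \<gamma>eq ds by linarith
      moreover have "D n K = ennreal dn" using Dfin by (simp add: dn_def)
      ultimately show ?thesis using nN by (simp add: ennreal_leI)
    qed
    then show ?thesis using K0 by blast
  qed
  have FIN: "\<exists>K\<ge>0. D n K \<le> ennreal e" if nN: "N \<le> n" and e: "0 < e" for n e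
  proof -
    obtain Kn :: nat where "(\<integral>\<^sup>+ x. e2ennreal (- g n x - ereal (real Kn)) \<partial>M n) < ennreal e"
      using tail0[OF gM negfin[OF nN], of "ennreal e"] e by auto
    then show ?thesis unfolding D_def by (intro exI[of _ "real Kn"]) auto
  qed
  have COMB: "\<exists>K\<ge>0. \<forall>n\<ge>N. D n K \<le> ennreal (4*\<epsilon>)" if e: "0 < \<epsilon>" for \<epsilon>
  proof -
    obtain K1 n1 where K1: "0 \<le> K1" "\<And>n. n1 \<le> n \<Longrightarrow> D n K1 \<le> ennreal (4*\<epsilon>)"
      using TAIL[OF e] by blast
    have ind: "\<exists>K\<ge>K1. \<forall>n. N \<le> n \<and> n < N + j \<longrightarrow> D n K \<le> ennreal (4*\<epsilon>)" for j
    proof (induction j)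
      case 0
      show ?case by auto
    next
      case (Suc j)
      then obtain K where K: "K \<ge> K1" "\<And>n. N \<le> n \<Longrightarrow> n < N + j \<Longrightarrow> D n K \<le> ennreal (4*\<epsilon>)" by blast
      obtain K' where K': "K' \<ge> 0" "D (N+j) K' \<le> ennreal (4*\<epsilon>)" using FIN[of "N+j" "4*\<epsilon>"] e by auto
      have "D n (max K K') \<le> ennreal (4*\<epsilon>)" if "N \<le> n" "n < N + Suc j" for n
      proof (cases "n < N + j")
        case True
        then show ?thesis using Dmono[of K "max K K'" n] K(2)[OF that(1) True] by simp
      next
        case False
        then have "n = N + j" using that by simp
        then show ?thesis using Dmono[of K' "max K K'" n] K'(2) by simp
      qed
      then show ?case using K(1) by (intro exI[of _ "max K K'"]) auto
    qed
    obtain K where K: "K \<ge> K1" "\<And>n. N \<le> n \<Longrightarrow> n < N + n1 \<Longrightarrow> D n K \<le> ennreal (4*\<epsilon>)"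
      using ind[of n1] by blast
    have "D n K \<le> ennreal (4*\<epsilon>)" if "N \<le> n" for n
    proof (cases "n < N + n1")
      case True
      then show ?thesis using K(2) that by simp
    next
      case False
      then show ?thesis using Dmono[of K1 K n] K(1) K1(2)[of n] by simp
    qed
    then show ?thesis using K(1) K1(1) by (intro exI[of _ K]) auto
  qed
  show ?thesis
  proof (intro exI[of _ N])
    show "unif_integrable (\<lambda>n. neg_part (f (n + N))) (\<lambda>n. M (n + N))"
      unfolding unif_integrable_def neg_part_def
    proof (rule order_tendstoI)
      fix a :: ennreal assume "a < 0" then show "eventually (\<lambda>K. a < (SUP n. \<integral>\<^sup>+ x. e2ennreal \<bar>- min (f (n + N) x) 0\<bar> * indicator {x. ereal K \<le> \<bar>- min (f (n + N) x) 0\<bar>} x \<partial>M (n + N))) at_top"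
        by simp
    next
      fix a :: ennreal assume a: "0 < a"
      obtain e :: real where e: "0 < e" "ennreal e < a"
      proof (cases a rule: ennreal_cases)
        case (real r)
        then have "0 < r" using a by simp
        then show ?thesis using real by (intro that[of "r/2"]) (auto simp: ennreal_less_iff)
      next
        case top
        then show ?thesis by (intro that[of 1]) auto
      qed
      obtain K where K: "0 \<le> K" "\<And>n. N \<le> n \<Longrightarrow> D n K \<le> ennreal (4*(e/16))"
        using COMB[of "e/16"] e(1) by auto
      show "eventually (\<lambda>K'. (SUP n. \<integral>\<^sup>+ x. e2ennreal \<bar>- min (f (n + N) x) 0\<bar> * indicator {x. ereal K' \<le> \<bar>- min (f (n + N) x) 0\<bar>} x \<partial>M (n + N)) < a) at_top"
        unfolding eventually_at_top_linorder
      proof (intro exI[of _ "2*K+1"] allI impI)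
        fix K' :: real assume K': "2*K+1 \<le> K'"
        have two: "2 * ennreal (4*(e/16)) = ennreal (e/2)"
        proof -
          have "ennreal (2 * (4*(e/16))) = ennreal 2 * ennreal (4*(e/16))" by (rule ennreal_mult') simp
          then show ?thesis by simp
        qed
        have "(SUP n. \<integral>\<^sup>+ x. e2ennreal \<bar>- min (f (n + N) x) 0\<bar> * indicator {x. ereal K' \<le> \<bar>- min (f (n + N) x) 0\<bar>} x \<partial>M (n + N)) \<le> ennreal (e/2)"
        proof (rule SUP_least)
          fix n
          have gM': "g (n+N) \<in> borel_measurable (M (n+N))" by (rule gM)
          have "(\<integral>\<^sup>+ x. e2ennreal \<bar>- min (f (n + N) x) 0\<bar> * indicator {x. ereal K' \<le> \<bar>- min (f (n + N) x) 0\<bar>} x \<partial>M (n + N))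
              \<le> (\<integral>\<^sup>+ x. 2 * e2ennreal (- g (n+N) x - ereal K) \<partial>M (n + N))"
            by (intro nn_integral_mono ui_point2) (use fg K K' in auto)
          also have "\<dots> = 2 * D (n+N) K" unfolding D_def
            by (rule nn_integral_cmult) (use gM' in measurable)
          also have "\<dots> \<le> 2 * ennreal (4*(e/16))" using K(2)[of "n+N"] by (intro mult_left_mono) auto
          finally show "(\<integral>\<^sup>+ x. e2ennreal \<bar>- min (f (n + N) x) 0\<bar> * indicator {x. ereal K' \<le> \<bar>- min (f (n + N) x) 0\<bar>} x \<partial>M (n + N)) \<le> ennreal (e/2)"
            using two by simp
        qed
        also have "ennreal (e/2) < ennreal e" using e(1) by (simp add: ennreal_less_iff)
        also have "\<dots> < a" by (rule e(2))
        finally show "(SUP n. \<integral>\<^sup>+ x. e2ennreal \<bar>- min (f (n + N) x) 0\<bar> * indicator {x. ereal K' \<le> \<bar>- min (f (n + N) x) 0\<bar>} x \<partial>M (n + N)) < a" .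
      qed
    qed
  qed
qed

end
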